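(* Let $n,m,T\in\mathbb{N}$, $L\in[1,T]$, and $u_{[0,T-1]}\in\mathbb{R}^{mT}$. If $u_{[0,T-1]}$ is not persistently exciting of order $n+L$, then there exist a controllable pair $(A,B)\in\mathbb{R}^{n\times n}\times\mathbb{R}^{n\times m}$ and a state sequence $x_{[0,T-L]}$ with $x(t+1)=Ax(t)+Bu(t)$ for all $t\in[0,T-L-1]$ (i.e. $\begin{bmatrix}u_{[0,T-L]}\\ x_{[0,T-L]}\end{bmatrix}\in\mathfrak{B}_{T-L+1}(A,B)$), together with $v\in\mathbb{R}^{mL}$ and $w\in\mathbb{R}^n\setminus\{0\}$, such that $$\begin{bmatrix}v^\top & w^\top\end{bmatrix}\begin{bmatrix}\mathcal{H}_L(u_{[0,T-1]})\\ \mathcal{H}_1(x_{[0,T-L]})\end{bmatrix}=0.$$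
   Context: For integers $a\le b$, $[a,b]=\{c\in\mathbb{Z}: a\le c\le b\}$. For $v:\mathbb{Z}_+\to\mathbb{R}^q$, $v_{[0,T-1]}=\begin{bmatrix}v(0)^\top & \cdots & v(T-1)^\top\end{bmatrix}^\top$. For $k\in[1,T]$ the Hankel matrix of depth $k$ is the $qk\times(T-k+1)$ block matrix $\mathcal{H}_k(v_{[0,T-1]})$ whose $(i,j)$ block ($i\in[0,k-1]$, $j\in[0,T-k]$) is $v(i+j)$; in particular $\mathcal{H}_1(x_{[0,T-L]})=\begin{bmatrix}x(0)&\cdots&x(T-L)\end{bmatrix}$. The sequence $v_{[0,T-1]}$ is persistently exciting of order $k$ if $k\le T$ and $\mathcal{H}_k(v_{[0,T-1]})$ has full row rank (if $k>T$ it is not persistently exciting of order $k$). $\mathfrak{B}_k(A,B)$ denotes the set of stacked vectors $\begin{bmatrix}u_{[0,k-1]}\\ x_{[0,k-1]}\end{bmatrix}$ with $x(t+1)=Ax(t)+Bu(t)$ for $t\in[0,k-2]$. *)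

theory Defs
  imports "HOL-Analysis.Analysis"
begin

definition mat_pow :: "real^'n^'n \<Rightarrow> nat \<Rightarrow> real^'n^'n" where
  "mat_pow A k = (((**) A) ^^ k) (mat 1)"

definition ctrb_columns :: "real^'n^'n \<Rightarrow> real^'m^'n \<Rightarrow> (real^'n) set" where
  "ctrb_columns A B = {column j (mat_pow A k ** B) | k j. k < CARD('n)}"

definition controllable :: "real^'n^'n \<Rightarrow> real^'m^'n \<Rightarrow> bool" where
  "controllable A B \<longleftrightarrow> dim (span (ctrb_columns A B)) = CARD('n)"

text \<open>Entry of the depth-k Hankel matrix of u: block (i,j) is u(i+j); row (i,a), column j.\<close>
definition hankel :: "nat \<Rightarrow> (nat \<Rightarrow> real^'m) \<Rightarrow> nat \<Rightarrow> 'm \<Rightarrow> nat \<Rightarrow> real" where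
  "hankel k u i a j = u (i + j) $ a"

definition hankel_full_row_rank :: "nat \<Rightarrow> nat \<Rightarrow> (nat \<Rightarrow> real^'m) \<Rightarrow> bool" where
  "hankel_full_row_rank T k u \<longleftrightarrow>
     (\<forall>c :: nat \<Rightarrow> real^'m.
        (\<forall>j \<le> T - k. (\<Sum>i<k. \<Sum>a\<in>UNIV. c i $ a * hankel k u i a j) = 0)
        \<longrightarrow> (\<forall>i<k. c i = 0))"

definition persistently_exciting :: "nat \<Rightarrow> nat \<Rightarrow> (nat \<Rightarrow> real^'m) \<Rightarrow> bool" where
  "persistently_exciting T k u \<longleftrightarrow> 1 \<le> k \<and> k \<le> T \<and> hankel_full_row_rank T k u"

end

theory Submission imports Defs "HOL-Computational_Algebra.Polynomial" begin

definition opp :: "real poly \<Rightarrow> (nat \<Rightarrow> real) \<Rightarrow> nat \<Rightarrow> real" where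
  "opp P s j = (\<Sum>r\<le>degree P. coeff P r * s (j + r))"

lemma opp_ext: assumes "degree P \<le> K" shows "opp P s j = (\<Sum>r\<le>K. coeff P r * s (j + r))"
  unfolding opp_def using assms
  by (intro sum.mono_neutral_left) (auto simp: coeff_eq_0)

lemma opp_0[simp]: "opp 0 s j = 0" by (simp add: opp_def)

lemma opp_add: "opp (P + Q) s j = opp P s j + opp Q s j"
proof -
  let ?K = "max (degree P) (degree Q)"
  have "opp (P+Q) s j = (\<Sum>r\<le>?K. coeff (P+Q) r * s (j + r))"
    by (rule opp_ext) (simp add: degree_add_le)
  also have "\<dots> = (\<Sum>r\<le>?K. coeff P r * s (j + r)) + (\<Sum>r\<le>?K. coeff Q r * s (j + r))"
    by (simp add: sum.distrib algebra_simps)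
  also have "\<dots> = opp P s j + opp Q s j" using opp_ext[of P ?K s j] opp_ext[of Q ?K s j] by simp
  finally show ?thesis .
qed

lemma opp_diff: "opp (P - Q) s j = opp P s j - opp Q s j"
proof -
  let ?K = "max (degree P) (degree Q)"
  have "opp (P-Q) s j = (\<Sum>r\<le>?K. coeff (P-Q) r * s (j + r))"
    by (rule opp_ext) (simp add: degree_diff_le)
  also have "\<dots> = (\<Sum>r\<le>?K. coeff P r * s (j + r)) - (\<Sum>r\<le>?K. coeff Q r * s (j + r))"
    by (simp add: sum_subtractf algebra_simps)
  also have "\<dots> = opp P s j - opp Q s j" using opp_ext[of P ?K s j] opp_ext[of Q ?K s j] by simp
  finally show ?thesis .
qed

lemma opp_smult: "opp (smult c P) s j = c * opp P s j"
proof -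
  have "opp (smult c P) s j = (\<Sum>r\<le>degree P. coeff (smult c P) r * s (j + r))"
    by (rule opp_ext) (simp add: degree_smult_le)
  then show ?thesis by (simp add: opp_def sum_distrib_left mult.assoc)
qed

lemma opp_sum: "opp (\<Sum>k\<in>A. P k) s j = (\<Sum>k\<in>A. opp (P k) s j)"
  by (induction A rule: infinite_finite_induct) (auto simp: opp_add)

lemma opp_sum_s: "opp P (\<lambda>t. \<Sum>a\<in>A. f a t) j = (\<Sum>a\<in>A. opp P (f a) j)"
  unfolding opp_def by (simp add: sum_distrib_left sum.swap[of _ A])

lemma opp_add_s: "opp P (\<lambda>t. s1 t + s2 t) j = opp P s1 j + opp P s2 j"
  unfolding opp_def by (simp add: sum.distrib algebra_simps)

lemma opp_mult_s: "opp P (\<lambda>t. c * s t) j = c * opp P s j"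
  unfolding opp_def by (simp add: sum_distrib_left algebra_simps)

lemma opp_pCons: "opp (pCons p0 P) s j = p0 * s j + opp P s (Suc j)"
proof -
  have "opp (pCons p0 P) s j = (\<Sum>r\<le>Suc (degree P). coeff (pCons p0 P) r * s (j + r))"
    by (rule opp_ext) (simp add: degree_pCons_le)
  also have "\<dots> = p0 * s j + (\<Sum>r\<le>degree P. coeff P r * s (Suc j + r))"
    by (subst sum.atMost_Suc_shift) simp
  finally show ?thesis by (simp add: opp_def)
qed

lemma opp_mult: "opp (P * Q) s j = opp P (\<lambda>t. opp Q s t) j"
proof (induction P arbitrary: j rule: pCons_induct)
  case 0 then show ?case by simp
next
  case (pCons a p)
  show ?case by (simp add: opp_add opp_smult opp_pCons pCons.IH)
qed

lemma opp_mode: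
  assumes "\<And>t. s (Suc t) = lam * s t + g t"
  shows "opp ([:-lam, 1:] * Q) s j = opp Q g j"
proof -
  have "opp ([:-lam, 1:] * Q) s j = opp (Q * [:-lam, 1:]) s j" by (simp add: mult.commute)
  also have "\<dots> = opp Q (\<lambda>t. opp [:-lam, 1:] s t) j" by (rule opp_mult)
  also have "(\<lambda>t. opp [:-lam, 1:] s t) = g"
    by (rule ext) (simp add: opp_pCons assms)
  finally show ?thesis .
qed

lemma poly_ext: fixes P :: "real poly" assumes "degree P \<le> K" shows "poly P x = (\<Sum>i\<le>K. coeff P i * x ^ i)"
proof -
  have "poly P x = (\<Sum>i\<le>degree P. coeff P i * x ^ i)" by (rule poly_altdef)
  also have "\<dots> = (\<Sum>i\<le>K. coeff P i * x ^ i)"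
    using assms by (intro sum.mono_neutral_left) (auto simp: coeff_eq_0)
  finally show ?thesis .
qed

lemma prodR_root:
  fixes lam :: "'n::finite \<Rightarrow> real"
  shows "i \<noteq> k \<Longrightarrow> poly (\<Prod>j\<in>UNIV-{k}. [:-lam j,1:]) (lam i) = 0"
  by (simp add: poly_prod) (metis DiffI UNIV_I singletonD)

lemma prodR_nz:
  fixes lam :: "'n::finite \<Rightarrow> real"
  shows "inj lam \<Longrightarrow> poly (\<Prod>j\<in>UNIV-{k}. [:-lam j,1:]) (lam k) \<noteq> 0"
  by (auto simp: poly_prod inj_def)

lemma prodR_deg:
  fixes lam :: "'n::finite \<Rightarrow> real"
  shows "degree (\<Prod>j\<in>UNIV-{k}. [:-lam j,1:]) = CARD('n) - 1"
  by (subst degree_prod_eq_sum_degree) (auto simp: card_Diff_singleton)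

lemma prod_roots_dvd:
  fixes p :: "real poly"
  assumes "finite S" "inj_on lam S" "\<forall>k\<in>S. poly p (lam k) = 0"
  shows "(\<Prod>k\<in>S. [:-lam k, 1:]) dvd p"
  using assms
proof (induction S arbitrary: p rule: finite_induct)
  case empty then show ?case by simp
next
  case (insert k S)
  have "poly p (lam k) = 0" using insert by simp
  then obtain q where q: "p = [:-lam k,1:] * q" using poly_eq_0_iff_dvd by (metis dvdE)
  have "\<forall>k'\<in>S. poly q (lam k') = 0"
  proof
    fix k' assume k': "k' \<in> S"
    then have "lam k' \<noteq> lam k" using insert(2,4) by (auto simp: inj_on_def)
    moreover have "poly p (lam k') = 0" using insert k' by simp
    ultimately show "poly q (lam k') = 0" using q by simp
  qed
  then have "(\<Prod>k\<in>S. [:-lam k, 1:]) dvd q" using insert by (auto intro: inj_on_subset)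
  then show ?case unfolding prod.insert[OF insert(1,2)] q by (rule mult_dvd_mono[OF dvd_refl])
qed

lemma vander_inj:
  fixes lam :: "'n::finite \<Rightarrow> real" and z :: "real^'n"
  assumes inj: "inj lam" and h: "\<forall>t<CARD('n). (\<Sum>k\<in>UNIV. lam k ^ t * z $ k) = 0"
  shows "z = 0"
proof -
  have "z $ k0 = 0" for k0
  proof -
  define P where "P = (\<Prod>j\<in>UNIV-{k0}. [:-lam j,1:])"
  have dP: "degree P \<le> CARD('n) - 1" unfolding P_def by (simp add: prodR_deg)
  have "(\<Sum>k\<in>UNIV. poly P (lam k) * z $ k)
      = (\<Sum>k\<in>UNIV. \<Sum>t\<le>CARD('n) - 1. coeff P t * (lam k ^ t * z $ k))"
    by (simp add: poly_ext[OF dP] sum_distrib_right mult.assoc)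
  also have "\<dots> = (\<Sum>t\<le>CARD('n) - 1. coeff P t * (\<Sum>k\<in>UNIV. lam k ^ t * z $ k))"
    by (simp add: sum.swap[of _ UNIV] sum_distrib_left)
  also have "\<dots> = 0"
  proof (intro sum.neutral ballI)
    fix t assume "t \<in> {..CARD('n) - 1}"
    then have "t < CARD('n)" by (cases "CARD('n)") auto
    then show "coeff P t * (\<Sum>k\<in>UNIV. lam k ^ t * z $ k) = 0" using h by simp
  qed
  finally have s0: "(\<Sum>k\<in>UNIV. poly P (lam k) * z $ k) = 0" .
  have "(\<Sum>k\<in>UNIV. poly P (lam k) * z $ k)
     = poly P (lam k0) * z $ k0 + (\<Sum>k\<in>UNIV-{k0}. poly P (lam k) * z $ k)"
    by (rule sum.remove) simp_all
  also have "(\<Sum>k\<in>UNIV-{k0}. poly P (lam k) * z $ k) = 0"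
    by (intro sum.neutral) (auto simp: P_def prodR_root)
  finally have "poly P (lam k0) * z $ k0 = 0" using s0 by simp
  moreover have "poly P (lam k0) \<noteq> 0" unfolding P_def using inj by (rule prodR_nz)
  ultimately show "z $ k0 = 0" by simp
  qed
  then show ?thesis by (simp add: vec_eq_iff)
qed

lemma vander_surj:
  fixes lam :: "'n::finite \<Rightarrow> real"
  assumes inj: "inj lam"
  shows "\<exists>x0::real^'n. \<forall>t<CARD('n). (\<Sum>k\<in>UNIV. lam k ^ t * x0 $ k) = G t"
proof -
  obtain f :: "'n \<Rightarrow> nat" and m where fm: "f ` UNIV = {i. i < m}" "inj f"
    using finite_imp_inj_to_nat_seg[of "UNIV :: 'n set"] by auto
  have m: "m = CARD('n)"
    using card_image[of f UNIV] fm by simp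
  define W :: "real^'n^'n" where "W = (\<chi> i k. lam k ^ f i)"
  have Wv: "(W *v z) $ i = (\<Sum>k\<in>UNIV. lam k ^ f i * z $ k)" for z i
    by (simp add: W_def matrix_vector_mult_def)
  have "inj ((*v) W)"
    unfolding vec.inj_iff_eq_0
  proof (intro allI impI)
    fix z assume z: "W *v z = 0"
    show "z = 0"
    proof (rule vander_inj[OF inj], intro allI impI)
      fix t assume "t < CARD('n)"
      then obtain i where "t = f i" using fm m by (metis (mono_tags, lifting) imageE mem_Collect_eq UNIV_I)
      then show "(\<Sum>k\<in>UNIV. lam k ^ t * z $ k) = 0" using Wv[of z i] z by simp
    qed
  qed
  then have "surj ((*v) W)" by (intro linear_inj_imp_surj matrix_vector_mul_linear)
  then obtain x0 where x0: "W *v x0 = (\<chi> i. G (f i))" by (metis surjD)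
  show ?thesis
  proof (intro exI allI impI)
    fix t assume "t < CARD('n)"
    then obtain i where "t = f i" using fm m by (metis (mono_tags, lifting) imageE mem_Collect_eq UNIV_I)
    then show "(\<Sum>k\<in>UNIV. lam k ^ t * x0 $ k) = G t" using Wv[of x0 i] x0 by simp
  qed
qed

theorem lemma1:
  fixes u :: "nat \<Rightarrow> real^'m" and T L :: nat
  assumes "1 \<le> L" and "L \<le> T"
    and "\<not> persistently_exciting T (CARD('n) + L) u"
  shows "\<exists>(A :: real^'n^'n) (B :: real^'m^'n) (x :: nat \<Rightarrow> real^'n) (v :: nat \<Rightarrow> real^'m) (w :: real^'n).
           controllable A B
         \<and> (\<forall>t < T - L. x (t + 1) = A *v x t + B *v u t)
         \<and> w \<noteq> 0
         \<and> (\<forall>j \<le> T - L. (\<Sum>i<L. \<Sum>a\<in>UNIV. v i $ a * hankel L u i a j) + w \<bullet> x j = 0)"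
proof -
  define n where "n = CARD('n)"
  define N where "N = n + L"
  have n1: "1 \<le> n" unfolding n_def by (cases "CARD('n)") auto
  obtain c :: "nat \<Rightarrow> real^'m" and i0 a0 where ci0: "i0 < N" "c i0 $ a0 \<noteq> 0"
    and crel: "\<And>jj. jj + N \<le> T \<Longrightarrow> (\<Sum>i<N. \<Sum>a\<in>UNIV. c i $ a * u (i + jj) $ a) = 0"
  proof (cases "N \<le> T")
    case False
    show ?thesis
      by (rule that[of 0 "\<lambda>i. 1" undefined]) (use False n1 in \<open>auto simp: N_def\<close>)
  next
    case True
    then have "\<not> hankel_full_row_rank T N u"
      using assms(1,3) n1 by (auto simp: persistently_exciting_def N_def n_def)
    then obtain c :: "nat \<Rightarrow> real^'m" where
      c1: "\<forall>j \<le> T - N. (\<Sum>i<N. \<Sum>a\<in>UNIV. c i $ a * hankel N u i a j) = 0"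
      and c2: "\<not> (\<forall>i<N. c i = 0)"
      unfolding hankel_full_row_rank_def by blast
    from c2 obtain i1 where i1: "i1 < N" "c i1 \<noteq> 0" by blast
    then obtain a1 where "c i1 $ a1 \<noteq> 0" by (metis vec_eq_iff zero_index)
    show ?thesis
    proof (rule that[of i1 c a1])
      fix jj assume "jj + N \<le> T"
      then show "(\<Sum>i<N. \<Sum>a\<in>UNIV. c i $ a * u (i + jj) $ a) = 0"
        using c1[rule_format, of jj] by (simp add: hankel_def)
    qed (use i1 \<open>c i1 $ a1 \<noteq> 0\<close> in auto)
  qed
  define cp where "cp a = (\<Sum>i<N. monom (c i $ a) i)" for a
  have coeff_cp: "coeff (cp a) i = (if i < N then c i $ a else 0)" for a i
    by (simp add: cp_def coeff_sum coeff_monom)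
  have deg_cp: "degree (cp a) \<le> N - 1" for a
    by (rule degree_le) (auto simp: coeff_cp)
  have Q0: "cp a0 \<noteq> 0"
    using ci0 coeff_cp[of a0 i0] by auto
  have "finite {x. poly (cp a0) x = 0}" by (rule poly_roots_finite[OF Q0])
  have "\<not> finite {x. poly (cp a0) x \<noteq> 0}"
  proof
    assume "finite {x. poly (cp a0) x \<noteq> 0}"
    with \<open>finite {x. poly (cp a0) x = 0}\<close> have "finite ({x. poly (cp a0) x \<noteq> 0} \<union> {x. poly (cp a0) x = 0})"
      by simp
    moreover have "{x. poly (cp a0) x \<noteq> 0} \<union> {x. poly (cp a0) x = 0} = (UNIV :: real set)" by auto
    ultimately show False using infinite_UNIV_char_0[where 'a=real] by simp
  qed
  then obtain g :: "nat \<Rightarrow> real" where g: "inj g" "range g \<subseteq> {x. poly (cp a0) x \<noteq> 0}"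
    using infinite_countable_subset by blast
  obtain f :: "'n \<Rightarrow> nat" and m where fm: "f ` UNIV = {i. i < m}" "inj f"
    using finite_imp_inj_to_nat_seg[of "UNIV :: 'n set"] by auto
  define lam where "lam k = g (f k)" for k
  have lam_inj: "inj lam" using g(1) fm(2) by (simp add: lam_def inj_def)
  have lamS: "poly (cp a0) (lam k) \<noteq> 0" for k using g(2) by (auto simp: lam_def)
  define R where "R k = (\<Prod>i\<in>UNIV-{k}. [:-lam i, 1:])" for k
  define ap where "ap = (\<Prod>i\<in>UNIV. [:-lam i, 1:])"
  have ap_R: "ap = [:-lam k, 1:] * R k" for k
    unfolding ap_def R_def by (rule prod.remove) simp_all
  have R_root: "i \<noteq> k \<Longrightarrow> poly (R k) (lam i) = 0" for i k
    unfolding R_def by (rule prodR_root)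
  have R_nz: "poly (R k) (lam k) \<noteq> 0" for k
    unfolding R_def using lam_inj by (rule prodR_nz)
  have deg_R: "degree (R k) = n - 1" for k
    unfolding R_def n_def by (rule prodR_deg)
  have deg_ap: "degree ap = n"
    unfolding ap_def n_def by (subst degree_prod_eq_sum_degree) auto
  have lc_ap: "coeff ap n = 1"
    using lead_coeff_prod[of "\<lambda>i. [:-lam i, 1:]" UNIV] deg_ap by (simp add: ap_def)
  have ap_nz: "ap \<noteq> 0" using lc_ap by auto
  define cl :: "'n \<Rightarrow> real^'m" where "cl k = (\<chi> a. poly (cp a) (lam k))" for k
  define beta :: "'n \<Rightarrow> real^'m" where "beta k = (1 / poly (R k) (lam k)) *\<^sub>R cl k" for k
  define bp where "bp a = (\<Sum>k\<in>UNIV. smult (beta k $ a) (R k))" for a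
  have bp_eval: "poly (bp a) (lam k) = poly (cp a) (lam k)" for a k
  proof -
    have "poly (bp a) (lam k) = (\<Sum>i\<in>UNIV. beta i $ a * poly (R i) (lam k))"
      by (simp add: bp_def poly_sum)
    also have "\<dots> = beta k $ a * poly (R k) (lam k) + (\<Sum>i\<in>UNIV-{k}. beta i $ a * poly (R i) (lam k))"
      by (rule sum.remove) simp_all
    also have "(\<Sum>i\<in>UNIV-{k}. beta i $ a * poly (R i) (lam k)) = 0"
      by (intro sum.neutral) (auto simp: R_root)
    finally show ?thesis using R_nz[of k] by (simp add: beta_def cl_def)
  qed
  have deg_bp: "degree (bp a) \<le> n - 1" for a
    unfolding bp_def
    by (intro degree_sum_le) (auto intro: order.trans[OF degree_smult_le] simp: deg_R)
  have dvd: "ap dvd (cp a - bp a)" for a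
    unfolding ap_def
    by (rule prod_roots_dvd) (use lam_inj in \<open>auto simp: bp_eval\<close>)
  define vp where "vp a = (cp a - bp a) div ap" for a
  have vp_eq: "cp a - bp a = ap * vp a" for a
    unfolding vp_def using dvd[of a] by simp
  have deg_vp: "degree (vp a) \<le> L - 1" for a
  proof (cases "vp a = 0")
    case False
    have "degree (cp a - bp a) \<le> N - 1"
      using deg_cp[of a] deg_bp[of a] n1 by (intro degree_diff_le) (auto simp: N_def)
    then have "n + degree (vp a) \<le> N - 1"
      using vp_eq[of a] degree_mult_eq[OF ap_nz False] deg_ap by simp
    then show ?thesis by (simp add: N_def)
  qed simp
  define A :: "real^'n^'n" where "A = (\<chi> i j. if i = j then lam i else 0)"
  define B :: "real^'m^'n" where "B = (\<chi> i. beta i)"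
  define w :: "real^'n" where "w = 1"
  define v :: "nat \<Rightarrow> real^'m" where "v l = (\<chi> a. coeff (vp a) l)" for l
  have Av: "(A *v y) $ i = lam i * y $ i" for y i
  proof -
    have "(A *v y) $ i = (\<Sum>j\<in>UNIV. (if i = j then lam i else 0) * y $ j)"
      by (simp add: A_def matrix_vector_mult_def)
    also have "\<dots> = (\<Sum>j\<in>UNIV. if i = j then lam i * y $ j else 0)" by (rule sum.cong) auto
    also have "\<dots> = lam i * y $ i" by simp
    finally show ?thesis .
  qed
  have Bv: "(B *v y) $ i = (\<Sum>a\<in>UNIV. beta i $ a * y $ a)" for y i
    by (simp add: B_def matrix_vector_mult_def)
  have mp: "mat_pow A t = (\<chi> i j. if i = j then lam i ^ t else 0)" for t
  proof (induction t)
    case 0 then show ?case by (simp add: mat_pow_def mat_def vec_eq_iff)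
  next
    case (Suc t)
    have "mat_pow A (Suc t) = A ** mat_pow A t" by (simp add: mat_pow_def)
    also have "\<dots> = (\<chi> i j. if i = j then lam i ^ Suc t else 0)"
    proof -
      have "(A ** mat_pow A t) $ i $ j = (if i = j then lam i ^ Suc t else 0)" for i j
      proof -
        have "(A ** mat_pow A t) $ i $ j
            = (\<Sum>k\<in>UNIV. (if i = k then lam i else 0) * (if k = j then lam k ^ t else 0))"
          unfolding matrix_matrix_mult_def Suc by (simp add: A_def)
        also have "\<dots> = (\<Sum>k\<in>UNIV. if k = i then (if i = j then lam i ^ Suc t else 0) else 0)"
          by (rule sum.cong) auto
        also have "\<dots> = (if i = j then lam i ^ Suc t else 0)" by simp
        finally show ?thesis .
      qed
      then show ?thesis by (simp add: vec_eq_iff)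
    qed
    finally show ?case .
  qed
  have ctrl: "controllable A B"
  proof -
    have ax: "axis ii 1 \<in> span (ctrb_columns A B)" for ii
    proof -
      define P where "P = R ii"
      define V where "V = (\<Sum>t\<le>n-1. coeff P t *\<^sub>R column a0 (mat_pow A t ** B))"
      have Vin: "V \<in> span (ctrb_columns A B)"
        unfolding V_def
      proof (intro span_sum span_mul span_base)
        fix t assume "t \<in> {..n-1}"
        then have "t < CARD('n)" using n1 unfolding n_def by (cases "CARD('n)") auto
        then show "column a0 (mat_pow A t ** B) \<in> ctrb_columns A B"
          unfolding ctrb_columns_def by blast
      qed
      have Vc: "V $ i = poly P (lam i) * beta i $ a0" for i
      proof -
        have MB: "(mat_pow A t ** B) $ i $ a0 = lam i ^ t * beta i $ a0" for t
        proof -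
          have "(mat_pow A t ** B) $ i $ a0 = (\<Sum>k\<in>UNIV. (if i = k then lam i ^ t else 0) * beta k $ a0)"
            by (simp add: mp matrix_matrix_mult_def B_def)
          also have "\<dots> = (\<Sum>k\<in>UNIV. if k = i then lam i ^ t * beta i $ a0 else 0)"
            by (rule sum.cong) auto
          also have "\<dots> = lam i ^ t * beta i $ a0" by simp
          finally show ?thesis .
        qed
        have "V $ i = (\<Sum>t\<le>n-1. coeff P t * lam i ^ t) * beta i $ a0"
          by (simp add: V_def column_def MB sum_distrib_right mult.assoc)
        also have "\<dots> = poly P (lam i) * beta i $ a0"
          using poly_ext[of P "n-1" "lam i"] deg_R by (simp add: P_def)
        finally show ?thesis .
      qed
      define sc where "sc = poly P (lam ii) * beta ii $ a0"
      have sc: "sc \<noteq> 0" using R_nz[of ii] lamS[of ii] by (simp add: sc_def P_def beta_def cl_def)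
      have "V = sc *\<^sub>R axis ii 1"
        by (auto simp: vec_eq_iff Vc sc_def axis_def P_def R_root)
      then have "axis ii 1 = (1/sc) *\<^sub>R V" using sc by simp
      then show ?thesis using Vin by (simp add: span_mul)
    qed
    have "span (ctrb_columns A B) = UNIV"
    proof -
      have "Basis \<subseteq> span (ctrb_columns A B)"
        using ax by (auto simp: Basis_vec_def)
      then have "span Basis \<subseteq> span (ctrb_columns A B)"
        by (metis span_minimal subspace_span)
      then show ?thesis by auto
    qed
    then show ?thesis by (simp add: controllable_def)
  qed
  define F where "F t xt = A *v xt + B *v u t" for t xt
  define z0 :: "nat \<Rightarrow> real^'n" where "z0 = rec_nat 0 F"
  define Vs where "Vs t = (\<Sum>i<L. \<Sum>a\<in>UNIV. v i $ a * hankel L u i a t)" for t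
  define G where "G t = - (Vs t + (\<Sum>k\<in>UNIV. z0 t $ k))" for t
  obtain x0 :: "real^'n" where x0: "\<And>t. t < n \<Longrightarrow> (\<Sum>k\<in>UNIV. lam k ^ t * x0 $ k) = G t"
    using vander_surj[OF lam_inj, of G] unfolding n_def by blast
  define x :: "nat \<Rightarrow> real^'n" where "x = rec_nat x0 F"
  have x_Suc: "x (Suc t) = A *v x t + B *v u t" for t by (simp add: x_def F_def)
  have z_Suc: "z0 (Suc t) = A *v z0 t + B *v u t" for t by (simp add: z0_def F_def)
  have x_0: "x 0 = x0" by (simp add: x_def)
  have z_0: "z0 0 = 0" by (simp add: z0_def)
  have x_comp: "x t $ k = lam k ^ t * x0 $ k + z0 t $ k" for t k
    by (induction t) (simp_all add: x_0 z_0 x_Suc z_Suc Av algebra_simps)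
  define E where "E t = Vs t + (\<Sum>k\<in>UNIV. x t $ k)" for t
  have E_init: "t < n \<Longrightarrow> E t = 0" for t
    using x0[of t] by (simp add: E_def G_def x_comp sum.distrib)
  have Vs_opp: "Vs t = (\<Sum>a\<in>UNIV. opp (vp a) (\<lambda>s. u s $ a) t)" for t
  proof -
    have "opp (vp a) (\<lambda>s. u s $ a) t = (\<Sum>i<L. coeff (vp a) i * u (i + t) $ a)" for a
    proof -
      have "opp (vp a) (\<lambda>s. u s $ a) t = (\<Sum>i\<le>L-1. coeff (vp a) i * u (t + i) $ a)"
        by (rule opp_ext[OF deg_vp])
      also have "{..L-1} = {..<L}" using assms(1) by auto
      finally show ?thesis by (simp add: add.commute)
    qed
    then show ?thesis
      by (simp add: Vs_def v_def hankel_def sum.swap[of _ UNIV])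
  qed
  have rec: "opp ap E jj = 0" if jj: "jj + n \<le> T - L" for jj
  proof -
    have X: "opp ap (\<lambda>t. x t $ k) jj = (\<Sum>a\<in>UNIV. beta k $ a * opp (R k) (\<lambda>s. u s $ a) jj)" for k
    proof -
      have "opp ap (\<lambda>t. x t $ k) jj = opp ([:-lam k, 1:] * R k) (\<lambda>t. x t $ k) jj"
        by (subst ap_R[of k]) (rule refl)
      also have "\<dots> = opp (R k) (\<lambda>t. \<Sum>a\<in>UNIV. beta k $ a * u t $ a) jj"
        by (rule opp_mode) (simp add: x_Suc Av Bv)
      also have "\<dots> = (\<Sum>a\<in>UNIV. beta k $ a * opp (R k) (\<lambda>s. u s $ a) jj)"
        by (simp add: opp_sum_s opp_mult_s)
      finally show ?thesis .
    qed
    have Y: "opp ap (\<lambda>t. \<Sum>k\<in>UNIV. x t $ k) jj = (\<Sum>a\<in>UNIV. opp (bp a) (\<lambda>s. u s $ a) jj)"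
    proof -
      have "opp ap (\<lambda>t. \<Sum>k\<in>UNIV. x t $ k) jj = (\<Sum>k\<in>UNIV. \<Sum>a\<in>UNIV. beta k $ a * opp (R k) (\<lambda>s. u s $ a) jj)"
        by (simp add: opp_sum_s X)
      also have "\<dots> = (\<Sum>a\<in>UNIV. \<Sum>k\<in>UNIV. beta k $ a * opp (R k) (\<lambda>s. u s $ a) jj)"
        by (rule sum.swap)
      also have "\<dots> = (\<Sum>a\<in>UNIV. opp (bp a) (\<lambda>s. u s $ a) jj)"
        by (simp add: bp_def opp_sum opp_smult)
      finally show ?thesis .
    qed
    have Z: "opp ap Vs jj = (\<Sum>a\<in>UNIV. opp (cp a - bp a) (\<lambda>s. u s $ a) jj)"
    proof -
      have "Vs = (\<lambda>t. \<Sum>a\<in>UNIV. opp (vp a) (\<lambda>s. u s $ a) t)" using Vs_opp by auto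
      then have "opp ap Vs jj = (\<Sum>a\<in>UNIV. opp ap (\<lambda>t. opp (vp a) (\<lambda>s. u s $ a) t) jj)"
        by (simp add: opp_sum_s)
      also have "\<dots> = (\<Sum>a\<in>UNIV. opp (cp a - bp a) (\<lambda>s. u s $ a) jj)"
        by (simp add: opp_mult[symmetric] vp_eq)
      finally show ?thesis .
    qed
    have "opp ap E jj = opp ap Vs jj + opp ap (\<lambda>t. \<Sum>k\<in>UNIV. x t $ k) jj"
      unfolding E_def by (rule opp_add_s)
    also have "\<dots> = (\<Sum>a\<in>UNIV. opp (cp a) (\<lambda>s. u s $ a) jj - opp (bp a) (\<lambda>s. u s $ a) jj)
                    + (\<Sum>a\<in>UNIV. opp (bp a) (\<lambda>s. u s $ a) jj)"
      by (simp add: Y Z opp_diff)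
    also have "\<dots> = (\<Sum>a\<in>UNIV. opp (cp a) (\<lambda>s. u s $ a) jj)"
      by (simp add: sum_subtractf)
    also have "\<dots> = (\<Sum>i<N. \<Sum>a\<in>UNIV. c i $ a * u (i + jj) $ a)"
    proof -
      have "opp (cp a) (\<lambda>s. u s $ a) jj = (\<Sum>i<N. c i $ a * u (i + jj) $ a)" for a
      proof -
        have "opp (cp a) (\<lambda>s. u s $ a) jj = (\<Sum>i\<le>N-1. coeff (cp a) i * u (jj + i) $ a)"
          by (rule opp_ext[OF deg_cp])
        also have "{..N-1} = {..<N}" using n1 by (auto simp: N_def)
        finally show ?thesis by (simp add: coeff_cp add.commute)
      qed
      then show ?thesis by (simp add: sum.swap[of _ UNIV])
    qed
    also have "\<dots> = 0" using crel[of jj] jj assms(2) by (simp add: N_def)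
    finally show ?thesis .
  qed
  have E0: "t \<le> T - L \<Longrightarrow> E t = 0" for t
  proof (induction t rule: less_induct)
    case (less t)
    show ?case
    proof (cases "t < n")
      case True then show ?thesis by (rule E_init)
    next
      case False
      define jj where "jj = t - n"
      have t: "t = jj + n" using False by (simp add: jj_def)
      have "opp ap E jj = 0" using rec[of jj] less.prems t by simp
      moreover have "opp ap E jj = (\<Sum>r\<le>n. coeff ap r * E (jj + r))"
        by (rule opp_ext) (simp add: deg_ap)
      moreover have "(\<Sum>r<n. coeff ap r * E (jj + r)) = 0"
        using less.IH less.prems t by (intro sum.neutral) auto
      ultimately have "E (jj + n) = 0" using lc_ap by (simp add: lessThan_Suc_atMost[symmetric])
      then show ?thesis using t by simp
    qed
  qed
  show ?thesis
    apply (rule exI[of _ A], rule exI[of _ B], rule exI[of _ x], rule exI[of _ v], rule exI[of _ w])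
  proof (intro conjI)
    show "controllable A B" by (rule ctrl)
    show "\<forall>t < T - L. x (t + 1) = A *v x t + B *v u t" using x_Suc by simp
    show "w \<noteq> 0" by (simp add: w_def vec_eq_iff)
    show "\<forall>j \<le> T - L. (\<Sum>i<L. \<Sum>a\<in>UNIV. v i $ a * hankel L u i a j) + w \<bullet> x j = 0"
      using E0 by (simp add: E_def Vs_def w_def inner_vec_def)
  qed
qed

end
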